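(* Let $R>0$ and let $f$ be analytic in an open neighbourhood of the closed disk $\overline{D_R}$, and assume $f$ is not a polynomial. Then for every integer $s\ge0$ there exists a finite $p(s)$ such that $f$ is $(s,p(s))$-valent in $D_R$.
   Context: $D_r=\{z\in\mathbb C:|z|<r\}$. A function $f$ regular in a domain $\Omega$ is $(s,p)$-valent in $\Omega$ if for every polynomial $P$ of degree at most $s$ the equation $f(z)=P(z)$ has at most $p$ solutions in $\Omega$, counted with multiplicity. *)

theory Defs
  imports "HOL-Analysis.Analysis" "HOL-Computational_Algebra.Polynomial"
begin

definition zero_mult :: "(complex \<Rightarrow> complex) \<Rightarrow> complex \<Rightarrow> enat" where
  "zero_mult g z =
     (if \<exists>n. (deriv ^^ n) g z \<noteq> 0
      then enat (LEAST n. (deriv ^^ n) g z \<noteq> 0) else \<infinity>)"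

text \<open>f is (s,p)-valent in \<Omega>: for every polynomial P of degree at most s, the
  equation f z = P z has at most p solutions in \<Omega>, counted with multiplicity
  (every finite set of points of \<Omega> carries total multiplicity at most p).\<close>
definition sp_valent :: "nat \<Rightarrow> nat \<Rightarrow> (complex \<Rightarrow> complex) \<Rightarrow> complex set \<Rightarrow> bool" where
  "sp_valent s p f \<Omega> \<longleftrightarrow>
     (\<forall>P :: complex poly. degree P \<le> s \<longrightarrow>
        (\<forall>S. finite S \<longrightarrow> S \<subseteq> \<Omega> \<longrightarrow>
           (\<Sum>z\<in>S. zero_mult (\<lambda>w. f w - poly P w) z) \<le> enat p))"

end

theory Submission imports Defs "HOL-Complex_Analysis.Complex_Analysis" begin

lemma fin_zeros:
  assumes "f holomorphic_on S" "open S" "connected S" "compact K" "K \<subseteq> S" "w \<in> S" "f w \<noteq> 0"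
  shows "finite {z\<in>K. f z = 0}"
proof (cases "f constant_on S")
  case True
  then obtain k where k: "\<forall>x\<in>S. f x = k" by (auto simp: constant_on_def)
  then have "{z\<in>K. f z = 0} = {}" using assms(5-7) by auto
  then show ?thesis by (metis finite.emptyI)
next
  case False
  then show ?thesis using holomorphic_compact_finite_zeros assms by blast
qed

lemma zm:
  assumes holh: "h holomorphic_on U" and U: "open U" "connected U" and w: "w \<in> U" "h w \<noteq> 0" and z: "z \<in> U"
  shows "zero_mult h z \<noteq> \<infinity> \<and> (h z = 0 \<longrightarrow> zorder h z = int (the_enat (zero_mult h z)))
        \<and> (h z \<noteq> 0 \<longrightarrow> zero_mult h z = 0)"
proof -
  have ex: "\<exists>n. (deriv ^^ n) h z \<noteq> 0"
  proof (rule ccontr)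
    assume "\<not> ?thesis"
    then have "\<And>n. (deriv ^^ n) h z = 0" by auto
    then have "h w = 0" using holomorphic_fun_eq_0_on_connected[OF holh U] z w by blast
    then show False using w by simp
  qed
  define n where "n = (LEAST n. (deriv ^^ n) h z \<noteq> 0)"
  have zm: "zero_mult h z = enat n" using ex unfolding zero_mult_def n_def by simp
  have nz: "(deriv ^^ n) h z \<noteq> 0" unfolding n_def using ex by (rule LeastI_ex)
  have lt: "\<And>i. i < n \<Longrightarrow> (deriv ^^ i) h z = 0" unfolding n_def using not_less_Least by blast
  have "h z = 0 \<longrightarrow> zorder h z = int n"
    using zorder_zero_eqI[OF holh U(1) z, of "int n"] nz lt by simp
  moreover have "h z \<noteq> 0 \<longrightarrow> n = 0"
    using lt[of 0] by (cases n) auto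
  ultimately show ?thesis using zm by (simp add: zero_enat_def)
qed

lemma wsum:
  assumes fin: "finite {p\<in>ball 0 R1. h p = 0}" and r: "0 < r" "r < R1"
    and sph: "\<forall>z\<in>sphere 0 r. h z \<noteq> 0"
  shows "(\<Sum>p\<in>{p\<in>ball 0 R1. h p = 0}. winding_number (circlepath 0 r) p * of_int (zorder h p))
       = of_int (\<Sum>p\<in>{p\<in>ball 0 r. h p = 0}. zorder h p)"
proof -
  have "of_int (\<Sum>p\<in>{p\<in>ball 0 r. h p = 0}. zorder h p) = (\<Sum>p\<in>{p\<in>ball 0 r. h p = 0}. (of_int (zorder h p) :: complex))"
    by simp
  also have "\<dots> = (\<Sum>p\<in>{p\<in>ball 0 R1. h p = 0}. winding_number (circlepath 0 r) p * of_int (zorder h p))"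
  proof (rule sum.mono_neutral_cong_left[OF fin])
    show "{p \<in> ball 0 r. h p = 0} \<subseteq> {p \<in> ball 0 R1. h p = 0}" using r by auto
    show "\<forall>x\<in>{p \<in> ball 0 R1. h p = 0} - {p \<in> ball 0 r. h p = 0}.
            winding_number (circlepath 0 r) x * of_int (zorder h x) = 0"
    proof
      fix x assume x: "x \<in> {p \<in> ball 0 R1. h p = 0} - {p \<in> ball 0 r. h p = 0}"
      then have "norm x \<noteq> r" using sph by auto
      with x have "x \<notin> cball 0 r" by auto
      then have "winding_number (circlepath 0 r) x = 0"
        by (intro winding_number_zero_outside[of _ "cball 0 r"]) (use r in auto)
      then show "winding_number (circlepath 0 r) x * of_int (zorder h x) = 0" by simp
    qed
    show "\<And>x. x \<in> {p \<in> ball 0 r. h p = 0} \<Longrightarrow>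
         of_int (zorder h x) = winding_number (circlepath 0 r) x * of_int (zorder h x)"
      by (subst winding_number_circlepath) auto
  qed
  finally show ?thesis by simp
qed


lemma rouche_ball:
  assumes h0: "g0 holomorphic_on ball 0 R1" and h1: "g1 holomorphic_on ball 0 R1"
    and f0: "finite {p\<in>ball 0 R1. g0 p = 0}" and f1: "finite {p\<in>ball 0 R1. g1 p = 0}"
    and r: "0 < r" "r < R1" and less: "\<forall>z\<in>sphere 0 r. norm (g1 z - g0 z) < norm (g0 z)"
  shows "(\<Sum>p\<in>{p\<in>ball 0 R1. g1 p = 0}. winding_number (circlepath 0 r) p * of_int (zorder g1 p))
       = (\<Sum>p\<in>{p\<in>ball 0 R1. g0 p = 0}. winding_number (circlepath 0 r) p * of_int (zorder g0 p))"
proof -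
  have eq: "(\<lambda>p. g0 p + (g1 p - g0 p)) = g1" by auto
  have "(\<Sum>p\<in>{p\<in>ball 0 R1. (\<lambda>p. g0 p + (g1 p - g0 p)) p = 0}. winding_number (circlepath 0 r) p * of_int (zorder (\<lambda>p. g0 p + (g1 p - g0 p)) p))
       = (\<Sum>p\<in>{p\<in>ball 0 R1. g0 p = 0}. winding_number (circlepath 0 r) p * of_int (zorder g0 p))"
  proof (rule Rouche_theorem)
    show "finite {p \<in> ball 0 R1. g0 p + (g1 p - g0 p) = 0}" using f1 by simp
    show "(\<lambda>p. g1 p - g0 p) holomorphic_on ball 0 R1" using h0 h1 by (intro holomorphic_intros)
    show "path_image (circlepath 0 r) \<subseteq> ball 0 R1" using r by auto
    show "\<forall>z\<in>path_image (circlepath 0 r). cmod (g1 z - g0 z) < cmod (g0 z)" using less r by auto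
    show "\<forall>z. z \<notin> ball 0 R1 \<longrightarrow> winding_number (circlepath 0 r) z = 0"
      using r by (intro allI impI winding_number_zero_outside[of _ "cball 0 r"]) auto
  qed (use h0 f0 r in auto)
  then show ?thesis by simp
qed


lemma enat_sum: "(\<Sum>x\<in>S. enat (f x)) = enat (sum f S)"
  by (induction S rule: infinite_finite_induct) (auto simp: zero_enat_def)

lemma local_bound:
  fixes f :: "complex \<Rightarrow> complex" and H :: "(nat \<Rightarrow> complex) \<Rightarrow> complex \<Rightarrow> complex"
  assumes R: "0 < R" "R < R'" and holf: "f holomorphic_on ball 0 R'"
    and Hdef: "H = (\<lambda>c z. c 0 * f z - (\<Sum>i\<le>s. c (Suc i) * z ^ i))"
    and nz: "\<And>c. c \<in> K \<Longrightarrow> \<exists>w\<in>ball 0 R'. H c w \<noteq> 0"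
    and c0: "c0 \<in> K"
  shows "\<exists>V N. open V \<and> c0 \<in> V \<and> (\<forall>c\<in>V \<inter> K. \<forall>S. finite S \<longrightarrow> S \<subseteq> ball 0 R \<longrightarrow>
            (\<Sum>z\<in>S. zero_mult (H c) z) \<le> enat N)"
proof -
  define R1 where "R1 = (R + R') / 2"
  have R1: "R < R1" "R1 < R'" using R unfolding R1_def by auto
  have holH: "H c holomorphic_on ball 0 R'" for c
    unfolding Hdef by (intro holomorphic_intros holf)
  have cb: "cball 0 R1 \<subseteq> ball 0 R'" using R1 by auto
  have finc: "finite {z\<in>cball 0 R1. H c z = 0}" if "c \<in> K" for c
    using nz[OF that] fin_zeros[OF holH _ _ _ cb] by auto
  have "infinite {R<..<R1}" using R1 by simp
  then have "infinite ({R<..<R1} - norm ` {z\<in>cball 0 R1. H c0 z = 0})"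
    using finc[OF c0] by (meson Diff_infinite_finite finite_imageI)
  then have "{R<..<R1} - norm ` {z\<in>cball 0 R1. H c0 z = 0} \<noteq> {}"
    by (rule infinite_imp_nonempty)
  then obtain r where "r \<in> {R<..<R1} - norm ` {z\<in>cball 0 R1. H c0 z = 0}"
    by blast
  then have r: "r \<in> {R<..<R1}" "r \<notin> norm ` {z\<in>cball 0 R1. H c0 z = 0}"
    by auto
  have sph0: "\<forall>z\<in>sphere 0 r. H c0 z \<noteq> 0"
  proof (intro ballI notI)
    fix z assume z: "z \<in> sphere 0 r" "H c0 z = 0"
    then have "z \<in> {z\<in>cball 0 R1. H c0 z = 0}" using r by auto
    then have "norm z \<in> norm ` {z\<in>cball 0 R1. H c0 z = 0}" by blast
    then show False using r(2) z(1) by simp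
  qed
  have contH: "continuous_on (sphere 0 r) (\<lambda>z. norm (H c0 z))"
    using r R1 by (intro continuous_on_norm holomorphic_on_imp_continuous_on holomorphic_on_subset[OF holH]) auto
  obtain x0 where x0: "x0 \<in> sphere 0 r" "\<forall>y\<in>sphere 0 r. norm (H c0 x0) \<le> norm (H c0 y)"
  proof -
    have ne: "sphere (0::complex) r \<noteq> {}" using r R by (simp add: sphere_eq_empty)
    show ?thesis using continuous_attains_inf[OF compact_sphere ne contH] that by blast
  qed
  define \<delta> where "\<delta> = norm (H c0 x0)"
  have \<delta>: "\<delta> > 0" "\<forall>y\<in>sphere 0 r. \<delta> \<le> norm (H c0 y)" using x0 sph0 unfolding \<delta>_def by auto
  have "bounded (f ` cball 0 R1)"
    using holf cb by (intro compact_imp_bounded compact_continuous_image holomorphic_on_imp_continuous_on)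
      (auto intro: holomorphic_on_subset)
  then obtain a where a: "\<forall>z\<in>cball 0 R1. norm (f z) \<le> a" by (auto simp: bounded_iff)
  define Bt where "Bt = \<bar>a\<bar> + (\<Sum>i\<le>s. R1 ^ i) + 1"
  have Bt: "Bt > 0" unfolding Bt_def using R1 R by (intro add_nonneg_pos add_nonneg_nonneg sum_nonneg zero_le_power) auto
  define \<epsilon> where "\<epsilon> = \<delta> / (2 * Bt)"
  have \<epsilon>: "\<epsilon> > 0" unfolding \<epsilon>_def using \<delta> Bt by auto
  define V where "V = {c. \<forall>i\<in>{..Suc s}. c i \<in> ball (c0 i) \<epsilon>}"
  have openV: "open V" unfolding V_def
    using product_topology_basis'[of "{..Suc s}" "\<lambda>i. ball (c0 i) \<epsilon>" "\<lambda>i. i"] by auto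
  have c0V: "c0 \<in> V" unfolding V_def using \<epsilon> by auto
  have diff: "norm (H c z - H c0 z) < \<delta>" if c: "c \<in> V" and z: "z \<in> cball 0 R1" for c z
  proof -
    have ci: "norm (c i - c0 i) < \<epsilon>" if "i \<le> Suc s" for i
      using c that unfolding V_def by (auto simp: dist_norm norm_minus_commute)
    have "H c z - H c0 z = (c 0 - c0 0) * f z - (\<Sum>i\<le>s. (c (Suc i) - c0 (Suc i)) * z ^ i)"
      unfolding Hdef by (simp add: algebra_simps sum_subtractf)
    also have "norm \<dots> \<le> norm ((c 0 - c0 0) * f z) + norm (\<Sum>i\<le>s. (c (Suc i) - c0 (Suc i)) * z ^ i)"
      by (rule norm_triangle_ineq4)
    also have "\<dots> \<le> \<epsilon> * \<bar>a\<bar> + (\<Sum>i\<le>s. \<epsilon> * R1 ^ i)"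
    proof (rule add_mono)
      have "norm (f z) \<le> a" using a z by blast
      then have "norm (f z) \<le> \<bar>a\<bar>" by linarith
      then show "norm ((c 0 - c0 0) * f z) \<le> \<epsilon> * \<bar>a\<bar>"
        unfolding norm_mult using ci[of 0] \<epsilon> by (intro mult_mono) auto
      have "norm (\<Sum>i\<le>s. (c (Suc i) - c0 (Suc i)) * z ^ i) \<le> (\<Sum>i\<le>s. norm ((c (Suc i) - c0 (Suc i)) * z ^ i))"
        by (rule norm_sum)
      also have "\<dots> \<le> (\<Sum>i\<le>s. \<epsilon> * R1 ^ i)"
      proof (rule sum_mono)
        fix i assume "i \<in> {..s}"
        then have "norm (c (Suc i) - c0 (Suc i)) \<le> \<epsilon>" using ci[of "Suc i"] by auto
        moreover have "norm z ^ i \<le> R1 ^ i" using z by (intro power_mono) auto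
        ultimately show "norm ((c (Suc i) - c0 (Suc i)) * z ^ i) \<le> \<epsilon> * R1 ^ i"
          unfolding norm_mult norm_power using \<epsilon> by (intro mult_mono) auto
      qed
      finally show "norm (\<Sum>i\<le>s. (c (Suc i) - c0 (Suc i)) * z ^ i) \<le> (\<Sum>i\<le>s. \<epsilon> * R1 ^ i)" .
    qed
    also have "\<dots> = \<epsilon> * (Bt - 1)" unfolding Bt_def by (simp add: sum_distrib_left algebra_simps)
    also have "\<dots> < \<epsilon> * Bt" using \<epsilon> by simp
    also have "\<dots> = \<delta> / 2" unfolding \<epsilon>_def using Bt by simp
    also have "\<dots> < \<delta>" using \<delta> by simp
    finally show ?thesis .
  qed
  define \<gamma> where "\<gamma> = circlepath (0::complex) r"
  define A where "A c = (\<Sum>p\<in>{p\<in>ball 0 r. H c p = 0}. zorder (H c) p)" for c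
  have sphc: "\<forall>z\<in>sphere 0 r. H c z \<noteq> 0" if "c \<in> V" for c
  proof
    fix z :: complex assume z: "z \<in> sphere 0 r"
    then have zc: "z \<in> cball 0 R1" using r by auto
    have "norm (H c z - H c0 z) < \<delta>" using diff[OF that zc] .
    also have "\<delta> \<le> norm (H c0 z)" using \<delta>(2) z by blast
    finally have "norm (H c z - H c0 z) < norm (H c0 z)" .
    then show "H c z \<noteq> 0" by auto
  qed
  have finb: "finite {p\<in>ball 0 R1. H c p = 0}" if "c \<in> K" for c
    by (rule finite_subset[OF _ finc[OF that]]) auto
  have holR1: "H c holomorphic_on ball 0 R1" for c
    by (rule holomorphic_on_subset[OF holH]) (use cb in auto)
  have Aeq: "A c = A c0" if c: "c \<in> V \<inter> K" for c
  proof -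
    have lessc: "\<forall>z\<in>sphere 0 r. norm (H c z - H c0 z) < norm (H c0 z)"
    proof
      fix z :: complex assume z: "z \<in> sphere 0 r"
      then have zc: "z \<in> cball 0 R1" using r by auto
      have "norm (H c z - H c0 z) < \<delta>" using diff[OF _ zc] c by blast
      also have "\<delta> \<le> norm (H c0 z)" using \<delta>(2) z by blast
      finally show "norm (H c z - H c0 z) < norm (H c0 z)" .
    qed
    have rr: "0 < r" "r < R1" using r R by auto
    have "of_int (A c) = (\<Sum>p\<in>{p\<in>ball 0 R1. H c p = 0}. winding_number (circlepath 0 r) p * of_int (zorder (H c) p))"
      unfolding A_def using wsum[OF finb[of c] rr sphc[of c]] c by simp
    also have "\<dots> = (\<Sum>p\<in>{p\<in>ball 0 R1. H c0 p = 0}. winding_number (circlepath 0 r) p * of_int (zorder (H c0) p))"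
      by (rule rouche_ball[OF holR1 holR1 finb[OF c0] finb rr lessc]) (use c in auto)
    also have "\<dots> = of_int (A c0)"
      unfolding A_def using wsum[OF finb[OF c0] rr sph0] by simp
    finally show ?thesis by simp
  qed
  show ?thesis
  proof (intro exI conjI ballI allI impI)
    show "open V" by (rule openV)
    show "c0 \<in> V" by (rule c0V)
    fix c and S :: "complex set" assume c: "c \<in> V \<inter> K" and S: "finite S" "S \<subseteq> ball 0 R"
    obtain w where w: "w \<in> ball 0 R'" "H c w \<noteq> 0" using nz c by blast
    have zmc: "zero_mult (H c) z \<noteq> \<infinity> \<and> (H c z = 0 \<longrightarrow> zorder (H c) z = int (the_enat (zero_mult (H c) z)))
        \<and> (H c z \<noteq> 0 \<longrightarrow> zero_mult (H c) z = 0)" if "z \<in> ball 0 R'" for z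
      by (rule zm[OF holH open_ball connected_ball w that])
    define t where "t z = the_enat (zero_mult (H c) z)" for z
    have SR: "S \<subseteq> ball 0 R'" using S R by auto
    have te: "zero_mult (H c) z = enat (t z)" if "z \<in> ball 0 R'" for z
      using zmc[OF that] unfolding t_def by (cases "zero_mult (H c) z") auto
    have t0: "t z = 0" if "z \<in> ball 0 R'" "H c z \<noteq> 0" for z
      using zmc[OF that(1)] that(2) unfolding t_def by (simp add: zero_enat_def)
    have tz: "int (t z) = zorder (H c) z" if "z \<in> ball 0 R'" "H c z = 0" for z
      using zmc[OF that(1)] that(2) unfolding t_def by simp
    define Zr where "Zr = {p\<in>ball 0 r. H c p = 0}"
    have finZr: "finite Zr" unfolding Zr_def
      by (rule finite_subset[OF _ finb[of c]]) (use c r in auto)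
    have ZrR: "Zr \<subseteq> ball 0 R'" unfolding Zr_def using r R1 by auto
    have "(\<Sum>z\<in>S. zero_mult (H c) z) = (\<Sum>z\<in>S. enat (t z))"
      using te SR by (intro sum.cong) auto
    also have "\<dots> = enat (\<Sum>z\<in>S. t z)" by (rule enat_sum)
    also have "(\<Sum>z\<in>S. t z) = (\<Sum>z\<in>S \<inter> Zr. t z)"
    proof (rule sum.mono_neutral_right[OF S(1)])
      show "S \<inter> Zr \<subseteq> S" by auto
      show "\<forall>i\<in>S - S \<inter> Zr. t i = 0"
      proof
        fix i assume i: "i \<in> S - S \<inter> Zr"
        then have "i \<in> ball 0 r" using S r by auto
        then have "H c i \<noteq> 0" using i unfolding Zr_def by auto
        then show "t i = 0" using t0 i SR by auto
      qed
    qed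
    also have "\<dots> \<le> (\<Sum>z\<in>Zr. t z)" by (rule sum_mono2[OF finZr]) auto
    also have "(\<Sum>z\<in>Zr. t z) = nat (A c)"
    proof -
      have "int (\<Sum>z\<in>Zr. t z) = (\<Sum>z\<in>Zr. int (t z))" by simp
      also have "\<dots> = A c" unfolding A_def Zr_def[symmetric] using tz ZrR
        by (intro sum.cong) (auto simp: Zr_def)
      finally show ?thesis by linarith
    qed
    also have "A c = A c0" using Aeq c by blast
    finally show "(\<Sum>z\<in>S. zero_mult (H c) z) \<le> enat (nat (A c0))" by simp
  qed
qed


theorem mainTheorem3:
  fixes f :: "complex \<Rightarrow> complex" and R :: real
  assumes "R > 0"
    and "f analytic_on cball 0 R"
    and "\<not> (\<exists>P :: complex poly. \<forall>z\<in>cball 0 R. f z = poly P z)"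
  shows "\<forall>s::nat. \<exists>p::nat. sp_valent s p f (ball 0 R)"
proof -
  obtain T where T: "open T" "cball 0 R \<subseteq> T" "f holomorphic_on T"
    using assms(2) analytic_on_holomorphic by blast
  obtain e where e: "e > 0" "(\<Union>x\<in>cball 0 R. ball x e) \<subseteq> T"
    using compact_subset_open_imp_ball_epsilon_subset[OF compact_cball T(1,2)] by blast
  define R' where "R' = R + e"
  have ballT: "ball 0 R' \<subseteq> T"
  proof
    fix z :: complex assume z: "z \<in> ball 0 R'"
    show "z \<in> T"
    proof (cases "norm z \<le> R")
      case True
      then have "z \<in> ball z e" "z \<in> cball 0 R" using e by auto
      then show ?thesis using e(2) by blast
    next
      case False
      define x where "x = complex_of_real (R / norm z) * z"
      have nz: "norm z > 0" using False assms(1) by auto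
      have nx: "norm x = R" unfolding x_def norm_mult norm_of_real using nz assms(1) by simp
      have "z - x = complex_of_real (1 - R / norm z) * z" by (simp add: x_def algebra_simps)
      then have "norm (z - x) = \<bar>1 - R / norm z\<bar> * norm z"
        by (simp only: norm_mult norm_of_real real_norm_def)
      also have "\<bar>1 - R / norm z\<bar> = 1 - R / norm z"
        using False nz by (simp add: field_simps)
      also have "(1 - R / norm z) * norm z = norm z - R" using nz by (simp add: field_simps)
      finally have "dist x z < e" using z False unfolding R'_def by (simp add: dist_norm norm_minus_commute)
      then have "z \<in> ball x e" "x \<in> cball 0 R" using nx by auto
      then show ?thesis using e(2) by blast
    qed
  qed
  have holf: "f holomorphic_on ball 0 R'" using holomorphic_on_subset[OF T(3) ballT] .
  have RR': "R < R'" unfolding R'_def using e by simp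
  show ?thesis
  proof
    fix s :: nat
    define H where "H = (\<lambda>(c::nat\<Rightarrow>complex) z. c 0 * f z - (\<Sum>i\<le>s. c (Suc i) * z ^ i))"
    define K where "K = (PiE UNIV (\<lambda>_. cball (0::complex) 1)) \<inter> {c. \<exists>i\<le>Suc s. norm (c i) = 1}"
    have holH: "H c holomorphic_on ball 0 R'" for c
      unfolding H_def by (intro holomorphic_intros holf)
    have nz: "\<exists>w\<in>ball 0 R'. H c w \<noteq> 0" if c: "c \<in> K" for c
    proof (rule ccontr)
      assume no: "\<not> (\<exists>w\<in>ball 0 R'. H c w \<noteq> 0)"
      then have zero: "\<forall>w\<in>ball 0 R'. c 0 * f w = (\<Sum>i\<le>s. c (Suc i) * w ^ i)"
        unfolding H_def by auto
      obtain i where i: "i \<le> Suc s" "norm (c i) = 1" using c unfolding K_def by auto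
      show False
      proof (cases "c 0 = 0")
        case False
        define P where "P = (\<Sum>i\<le>s. monom (c (Suc i) / c 0) i)"
        have "\<forall>z\<in>cball 0 R. f z = poly P z"
        proof
          fix z :: complex assume "z \<in> cball 0 R"
          then have "z \<in> ball 0 R'" using RR' by auto
          then have "c 0 * f z = (\<Sum>i\<le>s. c (Suc i) * z ^ i)" using zero by blast
          then have "f z = (\<Sum>i\<le>s. c (Suc i) * z ^ i) / c 0" using False by (simp add: field_simps)
          also have "\<dots> = poly P z"
            unfolding P_def by (simp add: poly_sum poly_monom sum_divide_distrib)
          finally show "f z = poly P z" .
        qed
        with assms(3) show False by blast
      next
        case True
        with i obtain k where k: "i = Suc k" "k \<le> s" by (cases i) auto
        then have "c (Suc k) \<noteq> 0" using i by auto
        then have fin: "finite {z. (\<Sum>i\<le>s. c (Suc i) * z ^ i) = 0}"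
          using k by (intro polyfun_rootbound_finite) auto
        have "ball 0 R' \<subseteq> {z. (\<Sum>i\<le>s. c (Suc i) * z ^ i) = 0}"
          using zero True by auto
        then have "finite (ball (0::complex) R')" using fin finite_subset by blast
        then have "ball (0::complex) R' = {}" using finite_imp_not_open by blast
        then show False using RR' assms(1) by simp
      qed
    qed
    have compK: "compact K"
    proof -
      have "compactin (product_topology (\<lambda>_. euclidean) UNIV) (PiE UNIV (\<lambda>_. cball (0::complex) 1))"
        by (simp add: compactin_PiE)
      then have c1: "compact (PiE UNIV (\<lambda>_. cball (0::complex) 1) :: (nat \<Rightarrow> complex) set)"
        by (simp add: euclidean_product_topology)
      have "closed {c::nat\<Rightarrow>complex. norm (c i) = 1}" for i
        by (rule closed_Collect_eq) (intro continuous_intros continuous_on_norm continuous_on_product_coordinates)+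
      then have cU: "closed (\<Union>i\<le>Suc s. {c::nat\<Rightarrow>complex. norm (c i) = 1})" by (intro closed_UN) auto
      have eqU: "(\<Union>i\<le>Suc s. {c::nat\<Rightarrow>complex. norm (c i) = 1}) = {c. \<exists>i\<le>Suc s. norm (c i) = 1}" by auto
      have cl: "closed {c::nat\<Rightarrow>complex. \<exists>i\<le>Suc s. norm (c i) = 1}" using cU unfolding eqU .
      show ?thesis unfolding K_def by (rule compact_Int_closed[OF c1 cl])
    qed
    have lb: "\<exists>V N. open V \<and> c0 \<in> V \<and> (\<forall>c\<in>V \<inter> K. \<forall>S. finite S \<longrightarrow> S \<subseteq> ball 0 R \<longrightarrow>
            (\<Sum>z\<in>S. zero_mult (H c) z) \<le> enat N)" if "c0 \<in> K" for c0
      by (rule local_bound[OF assms(1) RR' holf H_def nz that])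
    obtain V N where VN: "\<And>c0. c0 \<in> K \<Longrightarrow> open (V c0) \<and> c0 \<in> V c0 \<and> (\<forall>c\<in>V c0 \<inter> K. \<forall>S. finite S \<longrightarrow> S \<subseteq> ball 0 R \<longrightarrow>
            (\<Sum>z\<in>S. zero_mult (H c) z) \<le> enat (N c0))"
    proof -
      have lb': "\<forall>c0\<in>K. \<exists>V N. open V \<and> c0 \<in> V \<and> (\<forall>c\<in>V \<inter> K. \<forall>S. finite S \<longrightarrow> S \<subseteq> ball 0 R \<longrightarrow>
            (\<Sum>z\<in>S. zero_mult (H c) z) \<le> enat N)" using lb by blast
      obtain V where V: "\<forall>c0\<in>K. \<exists>N. open (V c0) \<and> c0 \<in> V c0 \<and> (\<forall>c\<in>V c0 \<inter> K. \<forall>S. finite S \<longrightarrow> S \<subseteq> ball 0 R \<longrightarrow>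
            (\<Sum>z\<in>S. zero_mult (H c) z) \<le> enat N)" using bchoice[OF lb'] by blast
      obtain N where N: "\<forall>c0\<in>K. open (V c0) \<and> c0 \<in> V c0 \<and> (\<forall>c\<in>V c0 \<inter> K. \<forall>S. finite S \<longrightarrow> S \<subseteq> ball 0 R \<longrightarrow>
            (\<Sum>z\<in>S. zero_mult (H c) z) \<le> enat (N c0))" using bchoice[OF V] by blast
      show ?thesis using that N by blast
    qed
    obtain C where C: "C \<subseteq> K" "finite C" "K \<subseteq> (\<Union>c\<in>C. V c)"
    proof (rule compactE_image[OF compK, of K V])
      show "\<And>c. c \<in> K \<Longrightarrow> open (V c)" using VN by blast
      show "K \<subseteq> (\<Union>c\<in>K. V c)" using VN by blast
    qed blast
    show "\<exists>p. sp_valent s p f (ball 0 R)"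
    proof (intro exI)
      show "sp_valent s (\<Sum>c\<in>C. N c) f (ball 0 R)" unfolding sp_valent_def
      proof (intro allI impI)
        fix P :: "complex poly" and S :: "complex set"
        assume P: "degree P \<le> s" and S: "finite S" "S \<subseteq> ball 0 R"
        define M where "M = Max (insert 1 ((\<lambda>i. norm (coeff P i)) ` {..s}))"
        have M1: "1 \<le> M" unfolding M_def by simp
        have Mge: "norm (coeff P i) \<le> M" if "i \<le> s" for i
          unfolding M_def using that by (intro Max_ge) auto
        have Min: "M \<in> insert 1 ((\<lambda>i. norm (coeff P i)) ` {..s})"
          unfolding M_def by (intro Max_in) auto
        define c where "c = (\<lambda>i. if i = 0 then complex_of_real (1 / M) else coeff P (i - 1) / complex_of_real M)"
        have Mpos: "M > 0" using M1 by simp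
        have cK: "c \<in> K"
        proof -
          have "c i \<in> cball 0 1" for i
          proof (cases "i = 0")
            case True then show ?thesis using M1 by (simp add: c_def norm_divide)
          next
            case False
            have "norm (coeff P (i - 1)) \<le> M"
            proof (cases "i - 1 \<le> s")
              case True then show ?thesis using Mge by blast
            next
              case False then have "coeff P (i - 1) = 0" using P by (intro coeff_eq_0) auto
              then show ?thesis using Mpos by simp
            qed
            then show ?thesis using False Mpos by (simp add: c_def norm_divide divide_le_eq)
          qed
          moreover have "\<exists>i\<le>Suc s. norm (c i) = 1"
          proof (cases "M = 1")
            case True then show ?thesis by (intro exI[of _ 0]) (simp add: c_def)
          next
            case False
            then obtain k where "k \<le> s" "M = norm (coeff P k)" using Min by auto
            then show ?thesis using Mpos by (intro exI[of _ "Suc k"]) (simp add: c_def norm_divide)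
          qed
          ultimately show ?thesis unfolding K_def by (auto simp: PiE_UNIV_domain)
        qed
        have polyP: "poly P w = (\<Sum>i\<le>s. coeff P i * w ^ i)" for w
        proof -
          have "poly P w = (\<Sum>i\<le>degree P. coeff P i * w ^ i)" by (rule poly_altdef)
          also have "\<dots> = (\<Sum>i\<le>s. coeff P i * w ^ i)"
            by (rule sum.mono_neutral_left) (use P in \<open>auto simp: coeff_eq_0\<close>)
          finally show ?thesis .
        qed
        have feq: "(\<lambda>w. f w - poly P w) = (\<lambda>w. complex_of_real M * H c w)"
        proof
          fix w
          have "complex_of_real M * H c w = f w - (\<Sum>i\<le>s. coeff P i * w ^ i)"
            unfolding H_def c_def using Mpos by (simp add: right_diff_distrib sum_distrib_left)
          then show "f w - poly P w = complex_of_real M * H c w" using polyP by simp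
        qed
        have zmeq: "zero_mult (\<lambda>w. f w - poly P w) z = zero_mult (H c) z" if "z \<in> ball 0 R'" for z
        proof -
          have "(deriv ^^ n) (\<lambda>w. complex_of_real M * H c w) z = complex_of_real M * (deriv ^^ n) (H c) z" for n
            by (rule higher_deriv_cmult[OF holH that open_ball])
          then show ?thesis unfolding feq zero_mult_def using Mpos by simp
        qed
        obtain c1 where c1: "c1 \<in> C" "c \<in> V c1" using C cK by blast
        have "(\<Sum>z\<in>S. zero_mult (\<lambda>w. f w - poly P w) z) = (\<Sum>z\<in>S. zero_mult (H c) z)"
          using S RR' zmeq by (intro sum.cong) auto
        also have "\<dots> \<le> enat (N c1)" using VN[of c1] c1 C cK S by blast
        also have "\<dots> \<le> enat (\<Sum>c\<in>C. N c)" using C(2) c1(1) by (simp add: member_le_sum)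
        finally show "(\<Sum>z\<in>S. zero_mult (\<lambda>w. f w - poly P w) z) \<le> enat (\<Sum>c\<in>C. N c)" .
      qed
    qed
  qed
qed

end
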